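(* For all positive integers $n$ and $j$, \[ \breve K\big(S_n(0)^{5j+1}S_n(1)\big)=\breve K\big(S_n(0)\,S_n(1)^{3j+1}\big). \]
   Context: For finite sequences of positive integers, $\alpha\beta$ denotes concatenation and $\alpha^k$ the concatenation of $k$ copies of $\alpha$. The continued fraction $[a_1;a_2:\dots:a_k]$ means $a_1+1/(a_2+1/(\cdots+1/a_k))$. For a sequence $(a_1,\dots,a_k)$ of positive integers with $k\ge2$, $\breve K(a_1,\dots,a_k)$ is the integer $c$ where $[a_1;a_2:\dots:a_{k-1}]=c/d$ with $\gcd(c,d)=1$, $c,d>0$ (the last entry $a_k$ is omitted). For a positive integer $n$ let $a_n=n^2+3$, $b_n=n^4+5n^2+5$, $S_n(0)=(na_n,na_n)$ and $S_n(1)=(nb_n,nb_n)$. *)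

theory Defs
  imports Complex_Main
begin

text \<open>Finite continued fraction [a1; a2 : ... : ak] as a rational number
  (defined for nonempty lists; the empty list is given the dummy value 0).\<close>
fun cfrac :: "nat list \<Rightarrow> rat" where
  "cfrac [] = 0"
| "cfrac [a] = of_nat a"
| "cfrac (a # b # rest) = of_nat a + 1 / cfrac (b # rest)"

text \<open>Kbreve (a1,...,ak): numerator c of the reduced fraction c/d = [a1;...;a_{k-1}]
  (last entry omitted). quotient_of gives the reduced form with positive denominator.\<close>
definition Kbreve :: "nat list \<Rightarrow> int" where
  "Kbreve xs = fst (quotient_of (cfrac (butlast xs)))"

definition lpow :: "nat list \<Rightarrow> nat \<Rightarrow> nat list" where
  "lpow xs k = concat (replicate k xs)"

definition a_seq :: "nat \<Rightarrow> nat" where "a_seq n = n^2 + 3"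
definition b_seq :: "nat \<Rightarrow> nat" where "b_seq n = n^4 + 5*n^2 + 5"

definition S :: "nat \<Rightarrow> nat \<Rightarrow> nat list" where
  "S n i = (if i = 0 then [n * a_seq n, n * a_seq n] else [n * b_seq n, n * b_seq n])"

end

theory Submission
  imports Defs
begin

type_synonym m2 = "int \<times> int \<times> int \<times> int"

fun mm :: "m2 \<Rightarrow> m2 \<Rightarrow> m2" where
 "mm (a,b,c,d) (e,f,g,h) = (a*e+b*g, a*f+b*h, c*e+d*g, c*f+d*h)"

definition I2 :: m2 where "I2 = (1,0,0,1)"
definition Mx :: "int \<Rightarrow> m2" where "Mx a = (a,1,1,0)"

fun mpow :: "m2 \<Rightarrow> nat \<Rightarrow> m2" where
 "mpow M 0 = I2" | "mpow M (Suc k) = mm M (mpow M k)"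

fun tr :: "m2 \<Rightarrow> int" where "tr (a,b,c,d) = a + d"
fun det :: "m2 \<Rightarrow> int" where "det (a,b,c,d) = a*d - b*c"
fun lin :: "int \<Rightarrow> m2 \<Rightarrow> m2 \<Rightarrow> m2" where
  "lin s (a,b,c,d) (e,f,g,h) = (s*a-e, s*b-f, s*c-g, s*d-h)"

fun mprod :: "nat list \<Rightarrow> m2" where
  "mprod [] = I2" | "mprod (a#r) = mm (Mx (int a)) (mprod r)"

lemma mm_assoc: "mm (mm X Y) Z = mm X (mm Y Z)"
  by (cases X; cases Y; cases Z) (simp add: algebra_simps)

lemma mm_I2 [simp]: "mm I2 X = X" "mm X I2 = X"
  by (cases X, simp add: I2_def)+

lemma mprod_append: "mprod (xs @ ys) = mm (mprod xs) (mprod ys)"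
  by (induction xs) (auto simp: mm_assoc)

lemma mpow_add: "mpow M (a + b) = mm (mpow M a) (mpow M b)"
  by (induction a) (auto simp: mm_assoc)

lemma mpow_mult: "mpow M (a * b) = mpow (mpow M a) b"
  by (induction b) (auto simp: mpow_add)

lemma mpow_1: "mpow M 1 = M" by simp

lemma mprod_lpow: "mprod (lpow xs k) = mpow (mprod xs) k"
  by (induction k) (auto simp: lpow_def mprod_append)

lemma det_mm: "det (mm X Y) = det X * det Y"
  by (cases X; cases Y) (simp add: algebra_simps)

lemma det_mpow: "det (mpow M k) = det M ^ k"
  by (induction k) (auto simp: det_mm I2_def)

lemma CH: "det M = 1 \<Longrightarrow> mm M M = lin (tr M) M I2"
  by (cases M) (simp add: I2_def algebra_simps power2_eq_square)

lemma lin_mm: "mm (mm X (lin s U V)) Y = lin s (mm (mm X U) Y) (mm (mm X V) Y)"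
  by (cases X; cases Y; cases U; cases V) (simp add: algebra_simps)

lemma lin_mm2: "mm (lin s U V) W = lin s (mm U W) (mm V W)"
  by (cases W; cases U; cases V) (simp add: algebra_simps)

lemma mpow_rec: "det M = 1 \<Longrightarrow> mpow M (Suc (Suc k)) = lin (tr M) (mpow M (Suc k)) (mpow M k)"
  by (simp add: mm_assoc[symmetric] CH lin_mm2)

lemma fst_lin: "fst (lin s U V) = s * fst U - fst V"
  by (cases U; cases V) simp

lemma key:
  assumes "det P = 1" "det Q = 1" "tr P = tr Q"
    and "fst (mm (mm X P) Y) = fst (mm (mm X Q) Y)"
  shows "fst (mm (mm X (mpow P j)) Y) = fst (mm (mm X (mpow Q j)) Y)"
proof -
  have "fst (mm (mm X (mpow P j)) Y) = fst (mm (mm X (mpow Q j)) Y) \<and>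
        fst (mm (mm X (mpow P (Suc j))) Y) = fst (mm (mm X (mpow Q (Suc j))) Y)"
  proof (induction j)
    case 0 then show ?case using assms(4) by simp
  next
    case (Suc j)
    then show ?case using assms
      by (simp only: mpow_rec lin_mm fst_lin)
  qed
  then show ?thesis by simp
qed

definition c :: "nat list \<Rightarrow> int" where "c xs = fst (mprod xs)"
definition t :: "nat list \<Rightarrow> int" where "t xs = fst (snd (snd (mprod xs)))"

lemma c_Nil [simp]: "c [] = 1" and t_Nil [simp]: "t [] = 0"
  by (simp_all add: c_def t_def I2_def)

lemma c_Cons [simp]: "c (a#r) = int a * c r + t r" and t_Cons [simp]: "t (a#r) = c r"
  by (cases "mprod r"; simp add: c_def t_def Mx_def)+

lemma c_pos: "\<forall>x\<in>set xs. x > 0 \<Longrightarrow> c xs > 0 \<and> t xs \<ge> 0"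
  by (induction xs) (auto intro!: add_pos_nonneg)

lemma coprime_ct: "coprime (c xs) (t xs)"
proof (induction xs)
  case Nil then show ?case by simp
next
  case (Cons a r)
  then show ?case
  proof -
    have "gcd (c r) (int a * c r + t r) = gcd (c r) (t r)" by (rule gcd_add_mult)
    then show ?thesis using Cons by (simp add: coprime_iff_gcd_eq_1 gcd.commute)
  qed
qed

lemma cfrac_ct: "xs \<noteq> [] \<Longrightarrow> \<forall>x\<in>set xs. x > 0 \<Longrightarrow> cfrac xs = of_int (c xs) / of_int (t xs)"
proof (induction xs rule: cfrac.induct)
  case 1 then show ?case by simp
next
  case (2 a) then show ?case by simp
next
  case (3 a b rest)
  have p: "c (b#rest) > 0" "t (b#rest) > 0" using c_pos[of "b#rest"] c_pos[of rest] 3(3) by auto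
  have "cfrac (a#b#rest) = of_nat a + 1 / (of_int (c (b#rest)) / of_int (t (b#rest)))"
    using 3 by simp
  also have "\<dots> = of_int (c (a#b#rest)) / of_int (t (a#b#rest))"
  proof -
    have "(0::rat) < of_int (c (b#rest))" using p(1) by (simp only: of_int_0_less_iff)
    then show ?thesis by (simp add: field_simps add.commute)
  qed
  finally show ?case .
qed

lemma Kbreve_c:
  assumes "butlast xs \<noteq> []" "\<forall>x\<in>set (butlast xs). x > 0"
  shows "Kbreve xs = c (butlast xs)"
proof -
  let ?L = "butlast xs"
  have p: "t ?L > 0" using assms c_pos[of "tl ?L"]
    by (cases ?L) (auto dest: list.set_sel(2))
  have "cfrac ?L = Fract (c ?L) (t ?L)"
    using cfrac_ct[OF assms] by (simp add: Fract_of_int_quotient)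
  then have "quotient_of (cfrac ?L) = (c ?L, t ?L)"
    using p coprime_ct[of ?L] by (simp add: quotient_of_Fract normalize_def)
  then show ?thesis by (simp add: Kbreve_def)
qed

lemma poly1:
  fixes x a b :: int
  assumes "a = x^3+3*x" "b = x^5+5*x^3+5*x"
  shows "tr (mpow (mm (Mx a) (Mx a)) 5) = tr (mpow (mm (Mx b) (Mx b)) 3)"
  unfolding assms by (simp add: numeral_eq_Suc Mx_def I2_def algebra_simps)

lemma poly2:
  fixes x a b :: int
  assumes "a = x^3+3*x" "b = x^5+5*x^3+5*x"
  shows "fst (mm (mm (mm (Mx a) (Mx a)) (mpow (mm (Mx a) (Mx a)) 5)) (Mx b))
       = fst (mm (mm (mm (Mx a) (Mx a)) (mpow (mm (Mx b) (Mx b)) 3)) (Mx b))"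
  unfolding assms by (simp add: numeral_eq_Suc Mx_def I2_def algebra_simps)

lemma set_lpow: "set (lpow xs k) \<subseteq> set xs"
  by (auto simp: lpow_def)

theorem proposition2:
  fixes n j :: nat
  assumes "n \<ge> 1" and "j \<ge> 1"
  shows "Kbreve (lpow (S n 0) (5*j+1) @ S n 1) = Kbreve (S n 0 @ lpow (S n 1) (3*j+1))"
proof -
  define A where "A = n * a_seq n"
  define B where "B = n * b_seq n"
  have Ap: "A > 0" "B > 0" using assms by (auto simp: A_def B_def a_seq_def b_seq_def)
  have iA: "int A = int n ^ 3 + 3 * int n" by (simp add: A_def a_seq_def algebra_simps power3_eq_cube power2_eq_square)
  have iB: "int B = int n ^ 5 + 5 * int n ^ 3 + 5 * int n"
    by (simp add: B_def b_seq_def algebra_simps power3_eq_cube power2_eq_square numeral_eq_Suc)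
  have S0: "S n 0 = [A, A]" and S1: "S n 1 = [B, B]" by (simp_all add: S_def A_def B_def)
  define MA where "MA = mm (Mx (int A)) (Mx (int A))"
  define MB where "MB = mm (Mx (int B)) (Mx (int B))"
  have mA: "mprod [A,A] = MA" and mB: "mprod [B,B] = MB" by (simp_all add: MA_def MB_def)
  have dA: "det MA = 1" "det MB = 1" by (simp_all add: MA_def MB_def det_mm Mx_def)
  have bl1: "butlast (lpow [A,A] (5*j+1) @ [B,B]) = lpow [A,A] (5*j+1) @ [B]"
    by (simp add: butlast_append)
  have lp: "lpow [B,B] (3*j+1) = lpow [B,B] (3*j) @ [B,B]"
    by (simp add: lpow_def replicate_append_same[symmetric] del: replicate_append_same)
  have bl2: "butlast ([A,A] @ lpow [B,B] (3*j+1)) = [A,A] @ lpow [B,B] (3*j) @ [B]"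
    by (simp only: lp) (simp add: butlast_append)
  have L: "Kbreve (lpow (S n 0) (5*j+1) @ S n 1) = fst (mm (mm MA (mpow (mpow MA 5) j)) (Mx (int B)))"
  proof -
    have "Kbreve (lpow (S n 0) (5*j+1) @ S n 1) = c (lpow [A,A] (5*j+1) @ [B])"
      unfolding S0 S1 bl1[symmetric] apply (rule Kbreve_c)
      unfolding bl1 using Ap set_lpow[of "[A,A]" "5*j+1"] by auto
    also have "\<dots> = fst (mm (mpow MA (5*j+1)) (Mx (int B)))"
      by (simp add: c_def mprod_append mprod_lpow MA_def)
    also have "mpow MA (5*j+1) = mm MA (mpow (mpow MA 5) j)"
      using mpow_add[of MA 1 "5*j"] by (simp add: mpow_mult)
    finally show ?thesis .
  qed
  have R: "Kbreve (S n 0 @ lpow (S n 1) (3*j+1)) = fst (mm (mm MA (mpow (mpow MB 3) j)) (Mx (int B)))"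
  proof -
    have "Kbreve (S n 0 @ lpow (S n 1) (3*j+1)) = c ([A,A] @ lpow [B,B] (3*j) @ [B])"
      unfolding S0 S1 bl2[symmetric] apply (rule Kbreve_c)
      unfolding bl2 using Ap set_lpow[of "[B,B]" "3*j"] by auto
    also have "\<dots> = fst (mm (mm MA (mpow MB (3*j))) (Mx (int B)))"
      by (simp add: c_def mprod_append mprod_lpow MA_def MB_def mm_assoc)
    finally show ?thesis by (simp add: mpow_mult)
  qed
  have "fst (mm (mm MA (mpow (mpow MA 5) j)) (Mx (int B))) = fst (mm (mm MA (mpow (mpow MB 3) j)) (Mx (int B)))"
    apply (rule key)
    using dA apply (simp add: det_mpow)
    using dA apply (simp add: det_mpow)
    using poly1[OF iA iB] apply (simp add: MA_def MB_def)
    using poly2[OF iA iB] apply (simp add: MA_def MB_def)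
    done
  then show ?thesis using L R by simp
qed

end
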